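(* Let $K$ be a link in $S^3$. For a random $(r,2s-1)$-meander link $L$, the probability that $L$ is isotopic to $K$ tends to $0$ as $r\to\infty$ (for any choice of $s=s(r)\ge1$).
   Context: A $p$-string of length $s$ is a correctly matched string of $s$ pairs of parentheses; there are $C_s=\frac{1}{s+1}\binom{2s}{s}$ of them. Given $p$-strings $U$ (upper), $W$ (lower) of length $s$, the meander graph is obtained by marking points $0,1,\dots,2s$ on the $x$-axis, taking the segment $[0,2s]$, joining points $a,b$ by an upper semicircle for each matched pair of $U$ at positions $a<b$ (positions $1,\dots,2s$), and points $a-1,b-1$ by a lower semicircle for each matched pair of $W$ at positions $a<b$; the points $1,\dots,2s-1$ are vertices. For $r\ge1$, replacing every closed curve of this picture by $r$ parallel copies gives the $(r,2s-1)$-meander graph with $(2s-1)r^2$ vertices; choosing over/under information at each vertex gives an $(r,2s-1)$-meander link. A random $(r,2s-1)$-meander link: $(U,W)$ uniform among the $C_s^2$ pairs and crossing information independent and uniform. *)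

theory Defs
  imports "HOL-Analysis.Analysis"
begin

section \<open>p-strings (balanced parenthesis strings), True = '(' and False = ')'\<close>

definition depth :: "bool list \<Rightarrow> int" where
  "depth xs = (\<Sum>x\<leftarrow>xs. if x then 1 else -1)"

definition balanced :: "bool list \<Rightarrow> bool" where
  "balanced xs \<longleftrightarrow> (\<forall>n\<le>length xs. depth (take n xs) \<ge> 0) \<and> depth xs = 0"

definition pstrings :: "nat \<Rightarrow> bool list set" where
  "pstrings s = {xs. length xs = 2 * s \<and> balanced xs}"

text \<open>Positions a < b (1-based, in 1..2s) form a matched pair of xs.\<close>
definition matched :: "bool list \<Rightarrow> nat \<Rightarrow> nat \<Rightarrow> bool" where
  "matched xs a b \<longleftrightarrow> 1 \<le> a \<and> a < b \<and> b \<le> length xs \<and> xs ! (a - 1) \<and> \<not> xs ! (b - 1)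
     \<and> balanced (take (b - a - 1) (drop a xs))"

type_synonym R3 = "real \<times> real \<times> real"

text \<open>Offset of the i-th parallel copy (i = 1..r); all offsets lie in (-1/8,1/8).\<close>
definition delta :: "nat \<Rightarrow> nat \<Rightarrow> real" where
  "delta r i = (2 * real i - real r - 1) / (8 * real r)"

text \<open>Tent function used to lift the over-strand at a crossing.\<close>
definition tent :: "nat \<Rightarrow> real \<Rightarrow> real" where
  "tent r t = max 0 (1 - 8 * real r * \<bar>t\<bar>)"

definition upper_arc :: "nat \<Rightarrow> nat \<Rightarrow> nat \<Rightarrow> nat \<Rightarrow> R3 set" where
  "upper_arc r a b i =
     (\<lambda>\<theta>. ((real a + real b) / 2 + ((real b - real a) / 2 + delta r i) * cos \<theta>,
           1/4 + ((real b - real a) / 2 + delta r i) * sin \<theta>, 0)) ` {0..pi}"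

definition lower_arc :: "nat \<Rightarrow> nat \<Rightarrow> nat \<Rightarrow> nat \<Rightarrow> R3 set" where
  "lower_arc r a b i =
     (\<lambda>\<theta>. ((real a + real b) / 2 - 1 + ((real b - real a) / 2 + delta r i) * cos \<theta>,
           - 1/4 - ((real b - real a) / 2 + delta r i) * sin \<theta>, 0)) ` {0..pi}"

text \<open>Crossings: (k,i,j) is the crossing near vertex k (k = 1..2s-1) of the i-th copy of the
  transversal strand through k with the j-th copy of the segment [0,2s].\<close>
definition crossings :: "nat \<Rightarrow> nat \<Rightarrow> (nat \<times> nat \<times> nat) set" where
  "crossings r s = {1..2 * s - 1} \<times> {1..r} \<times> {1..r}"

text \<open>Crossing information: c (k,i,j) = True iff the segment copy passes over.\<close>
definition crossing_choices :: "nat \<Rightarrow> nat \<Rightarrow> (nat \<times> nat \<times> nat \<Rightarrow> bool) set" where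
  "crossing_choices r s = PiE (crossings r s) (\<lambda>_. UNIV)"

definition zH :: "nat \<Rightarrow> nat \<Rightarrow> (nat \<times> nat \<times> nat \<Rightarrow> bool) \<Rightarrow> nat \<Rightarrow> real \<Rightarrow> real" where
  "zH r s c j x = (\<Sum>k\<in>{1..2 * s - 1}. \<Sum>i\<in>{1..r}.
       if c (k, i, j) then tent r (x - real k - delta r i) else 0)"

definition zV :: "nat \<Rightarrow> (nat \<times> nat \<times> nat \<Rightarrow> bool) \<Rightarrow> nat \<Rightarrow> nat \<Rightarrow> real \<Rightarrow> real" where
  "zV r c k i y = (\<Sum>j\<in>{1..r}. if c (k, i, j) then 0 else tent r (y - delta r j))"

text \<open>The meander link in R^3 (a PL/analytic realisation of the r-parallel meander diagram,
  shifted vertically near the axis so that the crossings form exact grids).\<close>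
definition meander_R3 ::
  "nat \<Rightarrow> nat \<Rightarrow> bool list \<Rightarrow> bool list \<Rightarrow> (nat \<times> nat \<times> nat \<Rightarrow> bool) \<Rightarrow> R3 set" where
  "meander_R3 r s U W c =
     (\<Union>(a, b)\<in>{(a, b). matched U a b}. \<Union>i\<in>{1..r}. upper_arc r a b i)
   \<union> (\<Union>(a, b)\<in>{(a, b). matched W a b}. \<Union>i\<in>{1..r}. lower_arc r a b i)
   \<union> (\<Union>k\<in>{1..2 * s - 1}. \<Union>i\<in>{1..r}.
        (\<lambda>y. (real k + delta r i, y, zV r c k i y)) ` {-1/4..1/4})
   \<union> (\<Union>j\<in>{1..r}. (\<lambda>x. (x, delta r j, zH r s c j x)) ` {- delta r j .. 2 * real s - delta r j})
   \<union> (\<Union>j\<in>{1..r}. (\<lambda>y. (- delta r j, y, 0)) ` {-1/4 .. delta r j})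
   \<union> (\<Union>j\<in>{1..r}. (\<lambda>y. (2 * real s - delta r j, y, 0)) ` {delta r j .. 1/4})"

definition S3 :: "(R3 \<times> real) set" where
  "S3 = sphere 0 1"

definition inv_stereo :: "R3 \<Rightarrow> R3 \<times> real" where
  "inv_stereo p = (scaleR (2 / ((norm p)\<^sup>2 + 1)) p, ((norm p)\<^sup>2 - 1) / ((norm p)\<^sup>2 + 1))"

definition meander_link ::
  "nat \<Rightarrow> nat \<Rightarrow> bool list \<Rightarrow> bool list \<Rightarrow> (nat \<times> nat \<times> nat \<Rightarrow> bool) \<Rightarrow> (R3 \<times> real) set" where
  "meander_link r s U W c = inv_stereo ` meander_R3 r s U W c"

definition is_link :: "(R3 \<times> real) set \<Rightarrow> bool" where
  "is_link K \<longleftrightarrow> K \<subseteq> S3 \<and> (\<exists>n::nat. n \<ge> 1 \<and> K homeomorphic ({..<n} \<times> sphere (0::complex) 1))"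

definition ambient_isotopic :: "(R3 \<times> real) set \<Rightarrow> (R3 \<times> real) set \<Rightarrow> bool" where
  "ambient_isotopic A B \<longleftrightarrow>
     (\<exists>H :: real \<times> (R3 \<times> real) \<Rightarrow> R3 \<times> real.
        continuous_on ({0..1} \<times> S3) H \<and> H ` ({0..1} \<times> S3) \<subseteq> S3 \<and>
        (\<forall>t\<in>{0..1}. \<exists>g. homeomorphism S3 S3 (\<lambda>x. H (t, x)) g) \<and>
        (\<forall>x\<in>S3. H (0, x) = x) \<and> (\<lambda>x. H (1, x)) ` A = B)"

text \<open>Probability that a random (r,2s-1)-meander link is isotopic to K
  (uniform over U, W and independent uniform crossing information).\<close>
definition meander_isotopy_prob :: "nat \<Rightarrow> nat \<Rightarrow> (R3 \<times> real) set \<Rightarrow> real" where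
  "meander_isotopy_prob r s K =
     real (card {(U, W, c). U \<in> pstrings s \<and> W \<in> pstrings s \<and> c \<in> crossing_choices r s \<and>
                            ambient_isotopic (meander_link r s U W c) K})
     / real (card (pstrings s \<times> pstrings s \<times> crossing_choices r s))"

end

theory Submission
  imports Defs
begin

lemma nat_close_eq: assumes "\<bar>real m - real n\<bar> < 1" shows "m = n"
proof -
  have "\<bar>real_of_int (int m - int n)\<bar> < 1" using assms by simp
  then have "\<bar>int m - int n\<bar> < 1" by (metis of_int_abs of_int_less_1_iff)
  then show ?thesis by simp
qed

lemma delta_bound: assumes "1 \<le> r" "i \<in> {1..r}" shows "\<bar>delta r i\<bar> < 1/8"
proof -
  have r: "real r \<ge> 1" "real i \<ge> 1" "real i \<le> real r" using assms by auto
  have "\<bar>2 * real i - real r - 1\<bar> < real r" using r by linarith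
  then have "\<bar>2 * real i - real r - 1\<bar> / (8 * real r) < real r / (8 * real r)"
    using r by (intro divide_strict_right_mono) auto
  then show ?thesis using r by (simp add: delta_def abs_divide)
qed

lemma delta_diff: "1 \<le> r \<Longrightarrow> delta r i - delta r j = (real i - real j) / (4 * real r)"
  by (simp add: delta_def diff_divide_distrib[symmetric]) (simp add: field_simps)

lemma delta_sep: assumes "1 \<le> r" "i \<noteq> j" shows "\<bar>delta r i - delta r j\<bar> \<ge> 1 / (4 * real r)"
proof -
  have "\<bar>real i - real j\<bar> \<ge> 1" using assms(2) by (cases "i < j") auto
  then show ?thesis using assms by (simp add: delta_diff abs_divide divide_right_mono)
qed

definition D :: "bool list \<Rightarrow> nat \<Rightarrow> int" where "D xs m = depth (take m xs)"

lemma depth_append: "depth (xs @ ys) = depth xs + depth ys"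
  by (simp add: depth_def)

lemma D_Suc: "m < length xs \<Longrightarrow> D xs (Suc m) = D xs m + (if xs ! m then 1 else -1)"
  by (simp add: D_def take_Suc_conv_app_nth depth_append) (simp add: depth_def)

lemma D_add: "a \<le> length xs \<Longrightarrow> D xs (a + n) = D xs a + depth (take n (drop a xs))"
  by (simp add: D_def take_add depth_append)

lemma matched_D:
  assumes "matched xs a b"
  shows "1 \<le> a" "a < b" "b \<le> length xs" "D xs b = D xs (a - 1)"
    "\<And>m. a \<le> m \<Longrightarrow> m < b \<Longrightarrow> D xs m > D xs (a - 1)"
proof -
  have a1: "1 \<le> a" and ab: "a < b" and bl: "b \<le> length xs" and xa: "xs ! (a - 1)"
    and xb: "\<not> xs ! (b - 1)" and bal: "balanced (take (b - a - 1) (drop a xs))"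
    using assms by (auto simp: matched_def)
  show "1 \<le> a" "a < b" "b \<le> length xs" using a1 ab bl by auto
  have Da: "D xs a = D xs (a - 1) + 1" using D_Suc[of "a - 1" xs] a1 ab bl xa by simp
  have lt: "length (take (b - a - 1) (drop a xs)) = b - a - 1" using ab bl by simp
  have inner: "D xs (a + n) \<ge> D xs a" if "n \<le> b - a - 1" for n
  proof -
    have "depth (take n (take (b - a - 1) (drop a xs))) \<ge> 0"
      using bal that lt unfolding balanced_def by auto
    then show ?thesis using D_add[of a xs n] ab bl that by (simp add: min_def)
  qed
  have "depth (take (b - a - 1) (drop a xs)) = 0" using bal by (simp add: balanced_def)
  then have Db1: "D xs (b - 1) = D xs a" using D_add[of a xs "b - a - 1"] ab bl by simp
  have "D xs b = D xs (b - 1) - 1" using D_Suc[of "b - 1" xs] ab bl xb by simp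
  then show "D xs b = D xs (a - 1)" using Db1 Da by simp
  fix m assume "a \<le> m" "m < b" "a \<le> m"
  then have "m - a \<le> b - a - 1" by arith
  then have "D xs (a + (m - a)) \<ge> D xs a" by (rule inner)
  then show "D xs m > D xs (a - 1)" using Da \<open>a \<le> m\<close> by simp
qed

lemma matched_A:
  fixes xs :: "bool list"
  assumes "a \<le> a'" "a' \<le> b" "b < b'"
    and m1: "D xs b = D xs (a - 1)" "\<And>m. a \<le> m \<Longrightarrow> m < b \<Longrightarrow> D xs m > D xs (a - 1)"
    and m2: "1 \<le> a'" "\<And>m. a' \<le> m \<Longrightarrow> m < b' \<Longrightarrow> D xs m > D xs (a' - 1)"
  shows False
proof -
  have "D xs b > D xs (a' - 1)" using m2(2)[of b] assms(2,3) by blast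
  moreover have "D xs (a' - 1) \<ge> D xs (a - 1)"
  proof (cases "a = a'")
    case True then show ?thesis by simp
  next
    case False
    then have "a \<le> a' - 1" "a' - 1 < b" using assms(1,2) m2(1) by arith+
    then show ?thesis using m1(2) by fastforce
  qed
  ultimately show False using m1(1) by linarith
qed

lemma matched_B:
  fixes xs :: "bool list"
  assumes "a < a'" "a' \<le> b" "b = b'"
    and m1: "D xs b = D xs (a - 1)" "\<And>m. a \<le> m \<Longrightarrow> m < b \<Longrightarrow> D xs m > D xs (a - 1)"
    and m2: "1 \<le> a'" "D xs b' = D xs (a' - 1)"
  shows False
proof -
  have "a \<le> a' - 1" "a' - 1 < b" using assms(1,2) m2(1) by arith+
  then have "D xs (a' - 1) > D xs (a - 1)" using m1(2) by blast
  then show False using m1(1) m2(2) assms(3) by simp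
qed

lemma matched_cases:
  assumes "matched xs a b" "matched xs a' b'"
  shows "(a = a' \<and> b = b') \<or> (a < a' \<and> b' < b) \<or> (a' < a \<and> b < b') \<or> b < a' \<or> b' < a"
proof -
  note m1 = matched_D[OF assms(1)] and m2 = matched_D[OF assms(2)]
  show ?thesis
  proof (rule ccontr)
    assume c: "\<not> ?thesis"
    have "a' \<le> b" "a \<le> b'" using c by auto
    consider "a \<le> a'" "b < b'" | "a \<le> a'" "b = b'" "a \<noteq> a'" | "a' \<le> a" "b' < b" | "a' \<le> a" "b' = b" "a \<noteq> a'"
      using c by linarith
    then show False
    proof cases
      case 1 then show False using matched_A[of a a' b b' xs] m1 m2 \<open>a' \<le> b\<close> by blast
    next
      case 2 then show False using matched_B[of a a' b b' xs] m1 m2 \<open>a' \<le> b\<close> by auto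
    next
      case 3 then show False using matched_A[of a' a b' b xs] m1 m2 \<open>a \<le> b'\<close> by blast
    next
      case 4 then show False using matched_B[of a' a b' b xs] m1 m2 \<open>a \<le> b'\<close> by auto
    qed
  qed
qed

lemma nat_lt_real: "a < b \<Longrightarrow> real a + 1 \<le> real b"
  by (metis Suc_leI add.commute of_nat_Suc of_nat_le_iff)

lemma circ_pt:
  fixes \<rho> \<theta> :: real
  assumes "0 < \<rho>" "\<theta> \<in> {0..pi}"
  shows "dist (m + \<rho> * cos \<theta>, y0 + \<rho> * sin \<theta>) (m, y0) = \<rho>"
    "sin \<theta> \<ge> 0" "sin \<theta> = 0 \<Longrightarrow> cos \<theta> = 1 \<or> cos \<theta> = -1"
proof -
  have e: "(\<rho> * cos \<theta>)\<^sup>2 + (\<rho> * sin \<theta>)\<^sup>2 = \<rho>\<^sup>2"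
    by (simp add: power_mult_distrib flip: distrib_left)
  have "dist (m + \<rho> * cos \<theta>, y0 + \<rho> * sin \<theta>) (m, y0) = sqrt ((\<rho> * cos \<theta>)\<^sup>2 + (\<rho> * sin \<theta>)\<^sup>2)"
    by (simp add: dist_Pair_Pair dist_real_def)
  also have "\<dots> = \<rho>" using assms by (simp only: e) simp
  finally show "dist (m + \<rho> * cos \<theta>, y0 + \<rho> * sin \<theta>) (m, y0) = \<rho>" .
  show "sin \<theta> \<ge> 0" using assms by (auto intro: sin_ge_zero)
  assume s0: "sin \<theta> = 0"
  have "\<theta> = 0 \<or> \<theta> = pi"
  proof (rule ccontr)
    assume "\<not> ?thesis"
    then have "0 < \<theta>" "\<theta> < pi" using assms by auto
    then show False using sin_gt_zero[of \<theta>] s0 by simp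
  qed
  then show "cos \<theta> = 1 \<or> cos \<theta> = -1" by auto
qed

lemma upper_arc_pt:
  assumes "1 \<le> r" "i \<in> {1..r}" "a < b" "p \<in> upper_arc r a b i"
  shows "\<exists>x y. p = (x, y, 0) \<and> dist (x, y) ((real a + real b) / 2, 1/4) = (real b - real a) / 2 + delta r i
     \<and> y \<ge> 1/4 \<and> (y = 1/4 \<longrightarrow> x = real b + delta r i \<or> x = real a - delta r i)"
proof -
  let ?\<rho> = "(real b - real a) / 2 + delta r i"
  have "real a + 1 \<le> real b" using assms(3) by (rule nat_lt_real)
  moreover have "\<bar>delta r i\<bar> < 1/8" using delta_bound assms by blast
  then have "- 1/8 < delta r i" by (simp add: abs_less_iff)
  ultimately have rp: "?\<rho> > 0" by argo
  from assms(4) obtain \<theta> where th: "\<theta> \<in> {0..pi}" and p: "p = ((real a + real b) / 2 + ?\<rho> * cos \<theta>,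
           1/4 + ?\<rho> * sin \<theta>, 0)" unfolding upper_arc_def by auto
  note c = circ_pt(1)[OF rp th, of "(real a + real b) / 2" "1/4"] circ_pt(2,3)[OF rp th]
  have "1/4 + ?\<rho> * sin \<theta> \<ge> 1/4" using c(2) rp by simp
  moreover have "(real a + real b) / 2 + ?\<rho> * cos \<theta> = real b + delta r i \<or> (real a + real b) / 2 + ?\<rho> * cos \<theta> = real a - delta r i"
    if "1/4 + ?\<rho> * sin \<theta> = 1/4"
  proof -
    have "sin \<theta> = 0" using that rp by simp
    then have "cos \<theta> = 1 \<or> cos \<theta> = -1" by (rule c(3))
    then show ?thesis by (auto simp: field_simps)
  qed
  ultimately show ?thesis using p c(1) by blast
qed

lemma lower_arc_pt:
  assumes "1 \<le> r" "i \<in> {1..r}" "a < b" "p \<in> lower_arc r a b i"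
  shows "\<exists>x y. p = (x, y, 0) \<and> dist (x, y) ((real a + real b) / 2 - 1, - 1/4) = (real b - real a) / 2 + delta r i
     \<and> y \<le> - 1/4 \<and> (y = - 1/4 \<longrightarrow> x = real b - 1 + delta r i \<or> x = real a - 1 - delta r i)"
proof -
  let ?\<rho> = "(real b - real a) / 2 + delta r i"
  have "real a + 1 \<le> real b" using assms(3) by (rule nat_lt_real)
  moreover have "\<bar>delta r i\<bar> < 1/8" using delta_bound assms by blast
  then have "- 1/8 < delta r i" by (simp add: abs_less_iff)
  ultimately have rp: "?\<rho> > 0" by argo
  from assms(4) obtain \<theta> where th: "\<theta> \<in> {0..pi}" and p: "p = ((real a + real b) / 2 - 1 + ?\<rho> * cos \<theta>,
           - 1/4 - ?\<rho> * sin \<theta>, 0)" unfolding lower_arc_def by auto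
  note c = circ_pt(1)[OF rp th, of "(real a + real b) / 2 - 1" "- 1/4"] circ_pt(2,3)[OF rp th]
  have d: "dist ((real a + real b) / 2 - 1 + ?\<rho> * cos \<theta>, - 1/4 - ?\<rho> * sin \<theta>) ((real a + real b) / 2 - 1, - 1/4) = ?\<rho>"
  proof -
    have "dist ((real a + real b) / 2 - 1 + ?\<rho> * cos \<theta>, - 1/4 - ?\<rho> * sin \<theta>) ((real a + real b) / 2 - 1, - 1/4)
       = dist ((real a + real b) / 2 - 1 + ?\<rho> * cos \<theta>, - 1/4 + ?\<rho> * sin \<theta>) ((real a + real b) / 2 - 1, - 1/4)"
      by (simp add: dist_Pair_Pair dist_real_def)
    then show ?thesis using c(1) by simp
  qed
  have "- 1/4 - ?\<rho> * sin \<theta> \<le> - 1/4" using c(2) rp by simp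
  moreover have "(real a + real b) / 2 - 1 + ?\<rho> * cos \<theta> = real b - 1 + delta r i \<or> (real a + real b) / 2 - 1 + ?\<rho> * cos \<theta> = real a - 1 - delta r i"
    if "- 1/4 - ?\<rho> * sin \<theta> = - 1/4"
  proof -
    have "sin \<theta> = 0" using that rp by simp
    then have "cos \<theta> = 1 \<or> cos \<theta> = -1" by (rule c(3))
    then show ?thesis by (auto simp: field_simps)
  qed
  ultimately show ?thesis using p d by blast
qed

lemma arcs_core:
  fixes P :: "real \<times> real"
  assumes "matched xs a b" "matched xs a' b'" "\<bar>d\<bar> < 1/8" "\<bar>e\<bar> < 1/8" "\<bar>d\<bar> \<noteq> \<bar>e\<bar>"
    and "dist P (m0 + (real a + real b) / 2, y0) = (real b - real a) / 2 + d"
    and "dist P (m0 + (real a' + real b') / 2, y0) = (real b' - real a') / 2 + e"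
  shows False
proof -
  let ?C = "(m0 + (real a + real b) / 2, y0)" and ?C' = "(m0 + (real a' + real b') / 2, y0)"
  have dc: "dist ?C ?C' = \<bar>(real a + real b) / 2 - (real a' + real b') / 2\<bar>"
    by (simp add: dist_Pair_Pair dist_real_def)
  have t1: "dist P ?C' \<le> dist P ?C + dist ?C ?C'" by (rule dist_triangle)
  have t2: "dist P ?C \<le> dist P ?C' + dist ?C ?C'" by (metis dist_commute dist_triangle)
  have t3: "dist ?C ?C' \<le> dist P ?C + dist P ?C'" by (metis dist_commute dist_triangle)
  have hd: "- 1/8 < d" "d < 1/8" "- 1/8 < e" "e < 1/8" using assms(3,4) by (simp_all add: abs_less_iff)+
  have dpos: "dist ?C ?C' \<ge> 0" by simp
  have dne: "d \<noteq> e" using assms(5) by auto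
  have dd: "dist ?C ?C' = (real a + real b) / 2 - (real a' + real b') / 2 \<or> dist ?C ?C' = (real a' + real b') / 2 - (real a + real b) / 2"
    unfolding dc by (simp add: abs_if)
  note m1 = matched_D[OF assms(1)] and m2 = matched_D[OF assms(2)]
  have ab: "real a + 1 \<le> real b" "real a' + 1 \<le> real b'" using m1(2) m2(2) by (auto intro: nat_lt_real)
  consider "a = a'" "b = b'" | "a < a'" "b' < b" | "a' < a" "b < b'" | "b < a'" | "b' < a"
    using matched_cases[OF assms(1,2)] by blast
  then show False
  proof cases
    case 1 then show ?thesis using t1 t2 dc assms dne by auto
  next
    case 2
    have nn: "real a + 1 \<le> real a'" "real b' + 1 \<le> real b" using nat_lt_real 2 by auto
    then show ?thesis using dd nn t1 t2 assms(6,7) hd dpos by argo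
  next
    case 3
    have nn: "real a' + 1 \<le> real a" "real b + 1 \<le> real b'" using nat_lt_real 3 by auto
    then show ?thesis using dd nn t1 t2 assms(6,7) hd dpos by argo
  next
    case 4
    have nn: "real b + 1 \<le> real a'" using nat_lt_real 4 by auto
    then show ?thesis using dd nn t3 assms(6,7) hd ab dpos by argo
  next
    case 5
    have nn: "real b' + 1 \<le> real a" using nat_lt_real 5 by auto
    then show ?thesis using dd nn t3 assms(6,7) hd ab dpos by argo
  qed
qed

lemma close_eq:
  assumes "real m + u = real n + v" "- 1/2 < u" "u < 1/2" "- 1/2 < v" "v < 1/2"
  shows "m = n"
proof (rule nat_close_eq)
  have "real m - real n < 1" "- (real m - real n) < 1" using assms by argo+
  then show "\<bar>real m - real n\<bar> < 1" by (simp add: abs_less_iff)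
qed

lemma tent_zero: assumes "1 \<le> r" "1 / (8 * real r) \<le> \<bar>t\<bar>" shows "tent r t = 0"
proof -
  have "1 \<le> 8 * real r * \<bar>t\<bar>" using assms by (simp add: field_simps)
  then show ?thesis by (simp add: tent_def)
qed

lemma tent_0: "tent r 0 = 1" by (simp add: tent_def)

lemma dbounds: assumes "1 \<le> r" "i \<in> {1..r}" shows "- 1/8 < delta r i" "delta r i < 1/8"
  using delta_bound[OF assms] by (simp_all add: abs_less_iff)

lemma zV_at:
  assumes r: "1 \<le> r" and j: "j \<in> {1..r}"
  shows "zV r c k i (delta r j) = (if c (k, i, j) then 0 else 1)"
proof -
  let ?g = "\<lambda>j'. if c (k, i, j') then 0 else tent r (delta r j - delta r j')"
  have "zV r c k i (delta r j) = ?g j + sum ?g ({1..r} - {j})"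
    unfolding zV_def by (rule sum.remove) (use j in auto)
  moreover have "sum ?g ({1..r} - {j}) = 0"
  proof (rule sum.neutral, intro ballI)
    fix j' assume "j' \<in> {1..r} - {j}"
    then have "j \<noteq> j'" by auto
    then have "1 / (4 * real r) \<le> \<bar>delta r j - delta r j'\<bar>" using delta_sep r by blast
    moreover have "1 / (8 * real r) \<le> 1 / (4 * real r)" using r by (simp add: frac_le)
    ultimately show "?g j' = 0" using tent_zero[OF r] by auto
  qed
  ultimately show ?thesis by (simp add: tent_0)
qed

lemma zH_at:
  assumes r: "1 \<le> r" and k: "k \<in> {1..2 * s - 1}" and i: "i \<in> {1..r}"
  shows "zH r s c j (real k + delta r i) = (if c (k, i, j) then 1 else 0)"
proof -
  let ?g = "\<lambda>k' i'. if c (k', i', j) then tent r (real k + delta r i - real k' - delta r i') else 0"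
  have small: "1 / (8 * real r) \<le> 1 / 8" using r by (simp add: frac_le)
  have inner: "(\<Sum>i'\<in>{1..r}. ?g k' i') = 0" if "k' \<in> {1..2 * s - 1}" "k' \<noteq> k" for k'
  proof (rule sum.neutral, intro ballI)
    fix i' assume i': "i' \<in> {1..r}"
    have "real k' + 1 \<le> real k \<or> real k + 1 \<le> real k'"
      using \<open>k' \<noteq> k\<close> nat_lt_real by (cases "k' < k") auto
    moreover note dbounds[OF r i] dbounds[OF r i']
    ultimately have "1/8 \<le> real k + delta r i - real k' - delta r i' \<or> 1/8 \<le> - (real k + delta r i - real k' - delta r i')"
      by argo
    then have "1/8 \<le> \<bar>real k + delta r i - real k' - delta r i'\<bar>" by auto
    then show "?g k' i' = 0" using tent_zero[OF r] small by auto
  qed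
  have innerk: "(\<Sum>i'\<in>{1..r}. ?g k i') = (if c (k, i, j) then 1 else 0)"
  proof -
    have "(\<Sum>i'\<in>{1..r}. ?g k i') = ?g k i + (\<Sum>i'\<in>{1..r} - {i}. ?g k i')"
      by (rule sum.remove) (use i in auto)
    moreover have "(\<Sum>i'\<in>{1..r} - {i}. ?g k i') = 0"
    proof (rule sum.neutral, intro ballI)
      fix i' assume "i' \<in> {1..r} - {i}"
      then have "i \<noteq> i'" by auto
      then have "1 / (4 * real r) \<le> \<bar>delta r i - delta r i'\<bar>" using delta_sep r by blast
      moreover have "1 / (8 * real r) \<le> 1 / (4 * real r)" using r by (simp add: frac_le)
      ultimately show "?g k i' = 0" using tent_zero[OF r] by auto
    qed
    ultimately show ?thesis by (simp add: tent_0)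
  qed
  have "zH r s c j (real k + delta r i) = (\<Sum>k'\<in>{1..2 * s - 1}. \<Sum>i'\<in>{1..r}. ?g k' i')"
    unfolding zH_def by simp
  also have "\<dots> = (\<Sum>i'\<in>{1..r}. ?g k i') + (\<Sum>k'\<in>{1..2 * s - 1} - {k}. \<Sum>i'\<in>{1..r}. ?g k' i')"
    by (rule sum.remove) (use k in auto)
  also have "(\<Sum>k'\<in>{1..2 * s - 1} - {k}. \<Sum>i'\<in>{1..r}. ?g k' i') = 0"
    by (rule sum.neutral) (use inner in auto)
  finally show ?thesis using innerk by simp
qed

definition UA :: "nat \<Rightarrow> bool list \<Rightarrow> nat \<Rightarrow> R3 set" where
  "UA r U i = (\<Union>(a, b)\<in>{(a, b). matched U a b}. upper_arc r a b i)"
definition LA :: "nat \<Rightarrow> bool list \<Rightarrow> nat \<Rightarrow> R3 set" where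
  "LA r W i = (\<Union>(a, b)\<in>{(a, b). matched W a b}. lower_arc r a b i)"
definition VV :: "nat \<Rightarrow> nat \<Rightarrow> (nat \<times> nat \<times> nat \<Rightarrow> bool) \<Rightarrow> nat \<Rightarrow> R3 set" where
  "VV r s c i = (\<Union>k\<in>{1..2 * s - 1}. (\<lambda>y. (real k + delta r i, y, zV r c k i y)) ` {-1/4..1/4})"
definition HH :: "nat \<Rightarrow> nat \<Rightarrow> (nat \<times> nat \<times> nat \<Rightarrow> bool) \<Rightarrow> nat \<Rightarrow> R3 set" where
  "HH r s c j = (\<lambda>x. (x, delta r j, zH r s c j x)) ` {- delta r j .. 2 * real s - delta r j}"
definition LE :: "nat \<Rightarrow> nat \<Rightarrow> R3 set" where
  "LE r j = (\<lambda>y. (- delta r j, y, 0)) ` {-1/4 .. delta r j}"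
definition RE :: "nat \<Rightarrow> nat \<Rightarrow> nat \<Rightarrow> R3 set" where
  "RE r s j = (\<lambda>y. (2 * real s - delta r j, y, 0)) ` {delta r j .. 1/4}"
definition piece :: "nat \<Rightarrow> nat \<Rightarrow> bool list \<Rightarrow> bool list \<Rightarrow> (nat \<times> nat \<times> nat \<Rightarrow> bool) \<Rightarrow> nat \<Rightarrow> R3 set" where
  "piece r s U W c i = UA r U i \<union> LA r W i \<union> VV r s c i \<union> HH r s c i \<union> LE r i \<union> RE r s i"

lemma meander_pieces: "meander_R3 r s U W c = (\<Union>i\<in>{1..r}. piece r s U W c i)"
proof -
  have 1: "(\<Union>(a, b)\<in>{(a, b). matched U a b}. \<Union>i\<in>{1..r}. upper_arc r a b i) = (\<Union>i\<in>{1..r}. UA r U i)"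
    unfolding UA_def by blast
  have 2: "(\<Union>(a, b)\<in>{(a, b). matched W a b}. \<Union>i\<in>{1..r}. lower_arc r a b i) = (\<Union>i\<in>{1..r}. LA r W i)"
    unfolding LA_def by blast
  have 3: "(\<Union>k\<in>{1..2 * s - 1}. \<Union>i\<in>{1..r}. (\<lambda>y. (real k + delta r i, y, zV r c k i y)) ` {-1/4..1/4})
     = (\<Union>i\<in>{1..r}. VV r s c i)"
    unfolding VV_def by blast
  show ?thesis
    unfolding meander_R3_def 1 2 3 piece_def UN_Un_distrib HH_def LE_def RE_def ..
qed

lemma UA_pt:
  assumes "1 \<le> r" "i \<in> {1..r}" "p \<in> UA r U i"
  shows "\<exists>a b x y. matched U a b \<and> p = (x, y, 0) \<and> dist (x, y) (0 + (real a + real b) / 2, 1/4) = (real b - real a) / 2 + delta r i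
     \<and> y \<ge> 1/4 \<and> (y = 1/4 \<longrightarrow> x = real b + delta r i \<or> x = real a - delta r i)"
proof -
  from assms(3) obtain a b where m: "matched U a b" and p: "p \<in> upper_arc r a b i"
    unfolding UA_def by auto
  show ?thesis using upper_arc_pt[OF assms(1,2) matched_D(2)[OF m] p] m by auto
qed

lemma LA_pt:
  assumes "1 \<le> r" "i \<in> {1..r}" "p \<in> LA r W i"
  shows "\<exists>a b x y. matched W a b \<and> p = (x, y, 0) \<and> dist (x, y) (-1 + (real a + real b) / 2, - 1/4) = (real b - real a) / 2 + delta r i
     \<and> y \<le> - 1/4 \<and> (y = - 1/4 \<longrightarrow> x = real b - 1 + delta r i \<or> x = real a - 1 - delta r i)"
proof -
  from assms(3) obtain a b where m: "matched W a b" and p: "p \<in> lower_arc r a b i"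
    unfolding LA_def by auto
  show ?thesis using lower_arc_pt[OF assms(1,2) matched_D(2)[OF m] p] m by (auto simp: algebra_simps)
qed

lemma VV_pt: "p \<in> VV r s c i \<Longrightarrow> \<exists>k y. k \<in> {1..2 * s - 1} \<and> - 1/4 \<le> y \<and> y \<le> 1/4 \<and> p = (real k + delta r i, y, zV r c k i y)"
  unfolding VV_def by auto
lemma HH_pt: "p \<in> HH r s c j \<Longrightarrow> \<exists>x. - delta r j \<le> x \<and> x \<le> 2 * real s - delta r j \<and> p = (x, delta r j, zH r s c j x)"
  unfolding HH_def by auto
lemma LE_pt: "p \<in> LE r j \<Longrightarrow> \<exists>y. - 1/4 \<le> y \<and> y \<le> delta r j \<and> p = (- delta r j, y, 0)"
  unfolding LE_def by auto
lemma RE_pt: "p \<in> RE r s j \<Longrightarrow> \<exists>y. delta r j \<le> y \<and> y \<le> 1/4 \<and> p = (2 * real s - delta r j, y, 0)"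
  unfolding RE_def by auto

locale lk =
  fixes r s :: nat and U W :: "bool list" and c :: "nat \<times> nat \<times> nat \<Rightarrow> bool"
  assumes r1: "1 \<le> r" and s1: "1 \<le> s"
begin

lemma UA_UA: "i \<in> {1..r} \<Longrightarrow> i' \<in> {1..r} \<Longrightarrow> \<bar>delta r i\<bar> \<noteq> \<bar>delta r i'\<bar> \<Longrightarrow> p \<in> UA r U i \<Longrightarrow> p \<in> UA r U i' \<Longrightarrow> False"
  using UA_pt[OF r1, of i p U] UA_pt[OF r1, of i' p U] arcs_core delta_bound[OF r1] by (metis prod.inject)

lemma LA_LA: "i \<in> {1..r} \<Longrightarrow> i' \<in> {1..r} \<Longrightarrow> \<bar>delta r i\<bar> \<noteq> \<bar>delta r i'\<bar> \<Longrightarrow> p \<in> LA r W i \<Longrightarrow> p \<in> LA r W i' \<Longrightarrow> False"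
  using LA_pt[OF r1, of i p W] LA_pt[OF r1, of i' p W] arcs_core delta_bound[OF r1] by (metis prod.inject)

lemma UA_LA:
  assumes i: "i \<in> {1..r}" and i': "i' \<in> {1..r}" and ne: "\<bar>delta r i\<bar> \<noteq> \<bar>delta r i'\<bar>"
    and p1: "p \<in> UA r U i" and p2: "p \<in> LA r W i'"
  shows False
proof -
  note b1 = dbounds[OF r1 i] and b2 = dbounds[OF r1 i']
  have dne: "delta r i \<noteq> delta r i'" "delta r i \<noteq> - delta r i'" using ne by auto
  obtain a b x y where m: "matched U a b" and p: "p = (x, y, 0)" and y1: "y \<ge> 1/4"
    and y2: "y = 1/4 \<longrightarrow> x = real b + delta r i \<or> x = real a - delta r i"
    using UA_pt[OF r1 i p1] by blast
  obtain a' b' x' y' where "p = (x', y', 0)" "y' \<le> - 1/4"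
    using LA_pt[OF r1 i' p2] by blast
  then show False using p y1 by auto
qed

lemma UA_VV:
  assumes i: "i \<in> {1..r}" and i': "i' \<in> {1..r}" and ne: "\<bar>delta r i\<bar> \<noteq> \<bar>delta r i'\<bar>"
    and p1: "p \<in> UA r U i" and p2: "p \<in> VV r s c i'"
  shows False
proof -
  note b1 = dbounds[OF r1 i] and b2 = dbounds[OF r1 i']
  have dne: "delta r i \<noteq> delta r i'" "delta r i \<noteq> - delta r i'" using ne by auto
  obtain a b x y where m: "matched U a b" and p: "p = (x, y, 0)" and y1: "y \<ge> 1/4"
    and y2: "y = 1/4 \<longrightarrow> x = real b + delta r i \<or> x = real a - delta r i"
    using UA_pt[OF r1 i p1] by blast
  obtain k y' where k: "k \<in> {1..2 * s - 1}" "- 1/4 \<le> y'" "y' \<le> 1/4" and p': "p = (real k + delta r i', y', zV r c k i' y')"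
    using VV_pt[OF p2] by blast
  have yy: "y = 1/4" and xx: "x = real k + delta r i'" using p p' y1 k by auto
  from y2 yy have "x = real b + delta r i \<or> x = real a + (- delta r i)" by auto
  then show False
  proof
    assume "x = real b + delta r i"
    then have "real b + delta r i = real k + delta r i'" using xx by simp
    moreover from close_eq[OF this] b1 b2 have "b = k" by argo
    ultimately show False using dne by simp
  next
    assume "x = real a + (- delta r i)"
    then have "real a + (- delta r i) = real k + delta r i'" using xx by simp
    moreover from close_eq[OF this] b1 b2 have "a = k" by argo
    ultimately show False using dne by simp
  qed
qed

lemma UA_HH:
  assumes i: "i \<in> {1..r}" and i': "i' \<in> {1..r}" and ne: "\<bar>delta r i\<bar> \<noteq> \<bar>delta r i'\<bar>"
    and p1: "p \<in> UA r U i" and p2: "p \<in> HH r s c i'"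
  shows False
proof -
  note b1 = dbounds[OF r1 i] and b2 = dbounds[OF r1 i']
  have dne: "delta r i \<noteq> delta r i'" "delta r i \<noteq> - delta r i'" using ne by auto
  obtain a b x y where m: "matched U a b" and p: "p = (x, y, 0)" and y1: "y \<ge> 1/4"
    and y2: "y = 1/4 \<longrightarrow> x = real b + delta r i \<or> x = real a - delta r i"
    using UA_pt[OF r1 i p1] by blast
  obtain x' where "p = (x', delta r i', zH r s c i' x')" using HH_pt[OF p2] by blast
  then show False using p y1 b2 by auto
qed

lemma UA_LE:
  assumes i: "i \<in> {1..r}" and i': "i' \<in> {1..r}" and ne: "\<bar>delta r i\<bar> \<noteq> \<bar>delta r i'\<bar>"
    and p1: "p \<in> UA r U i" and p2: "p \<in> LE r i'"
  shows False
proof -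
  note b1 = dbounds[OF r1 i] and b2 = dbounds[OF r1 i']
  have dne: "delta r i \<noteq> delta r i'" "delta r i \<noteq> - delta r i'" using ne by auto
  obtain a b x y where m: "matched U a b" and p: "p = (x, y, 0)" and y1: "y \<ge> 1/4"
    and y2: "y = 1/4 \<longrightarrow> x = real b + delta r i \<or> x = real a - delta r i"
    using UA_pt[OF r1 i p1] by blast
  obtain y' where "y' \<le> delta r i'" "p = (- delta r i', y', 0)" using LE_pt[OF p2] by blast
  then show False using p y1 b2 by auto
qed

lemma UA_RE:
  assumes i: "i \<in> {1..r}" and i': "i' \<in> {1..r}" and ne: "\<bar>delta r i\<bar> \<noteq> \<bar>delta r i'\<bar>"
    and p1: "p \<in> UA r U i" and p2: "p \<in> RE r s i'"
  shows False
proof -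
  note b1 = dbounds[OF r1 i] and b2 = dbounds[OF r1 i']
  have dne: "delta r i \<noteq> delta r i'" "delta r i \<noteq> - delta r i'" using ne by auto
  obtain a b x y where m: "matched U a b" and p: "p = (x, y, 0)" and y1: "y \<ge> 1/4"
    and y2: "y = 1/4 \<longrightarrow> x = real b + delta r i \<or> x = real a - delta r i"
    using UA_pt[OF r1 i p1] by blast
  obtain y' where yy': "delta r i' \<le> y'" "y' \<le> 1/4" and p': "p = (2 * real s - delta r i', y', 0)" using RE_pt[OF p2] by blast
  have yy: "y = 1/4" and xx: "x = real (2 * s) + (- delta r i')" using p p' y1 yy' by auto
  from y2 yy have "x = real b + delta r i \<or> x = real a + (- delta r i)" by auto
  then show False
  proof
    assume "x = real b + delta r i"
    then have "real b + delta r i = real (2 * s) + (- delta r i')" using xx by simp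
    moreover from close_eq[OF this] b1 b2 have "b = 2 * s" by argo
    ultimately show False using dne by simp
  next
    assume "x = real a + (- delta r i)"
    then have "real a + (- delta r i) = real (2 * s) + (- delta r i')" using xx by simp
    moreover from close_eq[OF this] b1 b2 have "a = 2 * s" by argo
    ultimately show False using dne by simp
  qed
qed

lemma LA_VV:
  assumes i: "i \<in> {1..r}" and i': "i' \<in> {1..r}" and ne: "\<bar>delta r i\<bar> \<noteq> \<bar>delta r i'\<bar>"
    and p1: "p \<in> LA r W i" and p2: "p \<in> VV r s c i'"
  shows False
proof -
  note b1 = dbounds[OF r1 i] and b2 = dbounds[OF r1 i']
  have dne: "delta r i \<noteq> delta r i'" "delta r i \<noteq> - delta r i'" using ne by auto
  obtain a b x y where m: "matched W a b" and p: "p = (x, y, 0)" and y1: "y \<le> - 1/4"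
    and y2: "y = - 1/4 \<longrightarrow> x = real b - 1 + delta r i \<or> x = real a - 1 - delta r i"
    using LA_pt[OF r1 i p1] by blast
  obtain k y' where k: "k \<in> {1..2 * s - 1}" "- 1/4 \<le> y'" "y' \<le> 1/4" and p': "p = (real k + delta r i', y', zV r c k i' y')"
    using VV_pt[OF p2] by blast
  have yy: "y = - 1/4" and xx: "x = real k + delta r i'" using p p' y1 k by auto
  from y2 yy have "x + 1 = real b + delta r i \<or> x + 1 = real a + (- delta r i)" by auto
  then show False
  proof
    assume "x + 1 = real b + delta r i"
    then have "real b + delta r i = real (Suc k) + delta r i'" using xx by simp
    moreover from close_eq[OF this] b1 b2 have "b = Suc k" by argo
    ultimately show False using dne by simp
  next
    assume "x + 1 = real a + (- delta r i)"
    then have "real a + (- delta r i) = real (Suc k) + delta r i'" using xx by simp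
    moreover from close_eq[OF this] b1 b2 have "a = Suc k" by argo
    ultimately show False using dne by simp
  qed
qed

lemma LA_HH:
  assumes i: "i \<in> {1..r}" and i': "i' \<in> {1..r}" and ne: "\<bar>delta r i\<bar> \<noteq> \<bar>delta r i'\<bar>"
    and p1: "p \<in> LA r W i" and p2: "p \<in> HH r s c i'"
  shows False
proof -
  note b1 = dbounds[OF r1 i] and b2 = dbounds[OF r1 i']
  have dne: "delta r i \<noteq> delta r i'" "delta r i \<noteq> - delta r i'" using ne by auto
  obtain a b x y where m: "matched W a b" and p: "p = (x, y, 0)" and y1: "y \<le> - 1/4"
    and y2: "y = - 1/4 \<longrightarrow> x = real b - 1 + delta r i \<or> x = real a - 1 - delta r i"
    using LA_pt[OF r1 i p1] by blast
  obtain x' where "p = (x', delta r i', zH r s c i' x')" using HH_pt[OF p2] by blast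
  then show False using p y1 b2 by auto
qed

lemma LA_LE:
  assumes i: "i \<in> {1..r}" and i': "i' \<in> {1..r}" and ne: "\<bar>delta r i\<bar> \<noteq> \<bar>delta r i'\<bar>"
    and p1: "p \<in> LA r W i" and p2: "p \<in> LE r i'"
  shows False
proof -
  note b1 = dbounds[OF r1 i] and b2 = dbounds[OF r1 i']
  have dne: "delta r i \<noteq> delta r i'" "delta r i \<noteq> - delta r i'" using ne by auto
  obtain a b x y where m: "matched W a b" and p: "p = (x, y, 0)" and y1: "y \<le> - 1/4"
    and y2: "y = - 1/4 \<longrightarrow> x = real b - 1 + delta r i \<or> x = real a - 1 - delta r i"
    using LA_pt[OF r1 i p1] by blast
  obtain y' where yy': "- 1/4 \<le> y'" "y' \<le> delta r i'" and p': "p = (- delta r i', y', 0)" using LE_pt[OF p2] by blast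
  have yy: "y = - 1/4" and xx: "x = - delta r i'" using p p' y1 yy' by auto
  from y2 yy have "x + 1 = real b + delta r i \<or> x + 1 = real a + (- delta r i)" by auto
  then show False
  proof
    assume "x + 1 = real b + delta r i"
    then have "real b + delta r i = real (Suc 0) + (- delta r i')" using xx by simp
    moreover from close_eq[OF this] b1 b2 have "b = Suc 0" by argo
    ultimately show False using dne by simp
  next
    assume "x + 1 = real a + (- delta r i)"
    then have "real a + (- delta r i) = real (Suc 0) + (- delta r i')" using xx by simp
    moreover from close_eq[OF this] b1 b2 have "a = Suc 0" by argo
    ultimately show False using dne by simp
  qed
qed

lemma LA_RE:
  assumes i: "i \<in> {1..r}" and i': "i' \<in> {1..r}" and ne: "\<bar>delta r i\<bar> \<noteq> \<bar>delta r i'\<bar>"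
    and p1: "p \<in> LA r W i" and p2: "p \<in> RE r s i'"
  shows False
proof -
  note b1 = dbounds[OF r1 i] and b2 = dbounds[OF r1 i']
  have dne: "delta r i \<noteq> delta r i'" "delta r i \<noteq> - delta r i'" using ne by auto
  obtain a b x y where m: "matched W a b" and p: "p = (x, y, 0)" and y1: "y \<le> - 1/4"
    and y2: "y = - 1/4 \<longrightarrow> x = real b - 1 + delta r i \<or> x = real a - 1 - delta r i"
    using LA_pt[OF r1 i p1] by blast
  obtain y' where "delta r i' \<le> y'" "p = (2 * real s - delta r i', y', 0)" using RE_pt[OF p2] by blast
  then show False using p y1 b2 by auto
qed

lemma VV_VV:
  assumes i: "i \<in> {1..r}" and i': "i' \<in> {1..r}" and ne: "\<bar>delta r i\<bar> \<noteq> \<bar>delta r i'\<bar>"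
    and p1: "p \<in> VV r s c i" and p2: "p \<in> VV r s c i'"
  shows False
proof -
  note b1 = dbounds[OF r1 i] and b2 = dbounds[OF r1 i']
  have dne: "delta r i \<noteq> delta r i'" "delta r i \<noteq> - delta r i'" using ne by auto
  obtain k y where k: "k \<in> {1..2 * s - 1}" "- 1/4 \<le> y" "y \<le> 1/4" and p: "p = (real k + delta r i, y, zV r c k i y)"
    using VV_pt[OF p1] by blast
  have kr: "1 \<le> real k" "real k + 1 \<le> 2 * real s" using k s1 by auto
  obtain k' y' where p': "p = (real k' + delta r i', y', zV r c k' i' y')"
    using VV_pt[OF p2] by blast
  then have "real k + delta r i = real k' + delta r i'" using p by simp
  moreover from close_eq[OF this] b1 b2 have "k = k'" by argo
  ultimately show False using dne by simp
qed

lemma VV_HH: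
  assumes i: "i \<in> {1..r}" and i': "i' \<in> {1..r}" and ne: "\<bar>delta r i\<bar> \<noteq> \<bar>delta r i'\<bar>"
    and p1: "p \<in> VV r s c i" and p2: "p \<in> HH r s c i'"
  shows False
proof -
  note b1 = dbounds[OF r1 i] and b2 = dbounds[OF r1 i']
  have dne: "delta r i \<noteq> delta r i'" "delta r i \<noteq> - delta r i'" using ne by auto
  obtain k y where k: "k \<in> {1..2 * s - 1}" "- 1/4 \<le> y" "y \<le> 1/4" and p: "p = (real k + delta r i, y, zV r c k i y)"
    using VV_pt[OF p1] by blast
  have kr: "1 \<le> real k" "real k + 1 \<le> 2 * real s" using k s1 by auto
  obtain x' where p': "p = (x', delta r i', zH r s c i' x')" using HH_pt[OF p2] by blast
  have "x' = real k + delta r i" "y = delta r i'" "zV r c k i y = zH r s c i' x'" using p p' by auto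
  then have "zV r c k i (delta r i') = zH r s c i' (real k + delta r i)" by simp
  then show False unfolding zV_at[OF r1 i'] zH_at[OF r1 k(1) i] by (auto split: if_splits)
qed

lemma VV_LE:
  assumes i: "i \<in> {1..r}" and i': "i' \<in> {1..r}" and ne: "\<bar>delta r i\<bar> \<noteq> \<bar>delta r i'\<bar>"
    and p1: "p \<in> VV r s c i" and p2: "p \<in> LE r i'"
  shows False
proof -
  note b1 = dbounds[OF r1 i] and b2 = dbounds[OF r1 i']
  have dne: "delta r i \<noteq> delta r i'" "delta r i \<noteq> - delta r i'" using ne by auto
  obtain k y where k: "k \<in> {1..2 * s - 1}" "- 1/4 \<le> y" "y \<le> 1/4" and p: "p = (real k + delta r i, y, zV r c k i y)"
    using VV_pt[OF p1] by blast
  have kr: "1 \<le> real k" "real k + 1 \<le> 2 * real s" using k s1 by auto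
  obtain y' where "p = (- delta r i', y', 0)" using LE_pt[OF p2] by blast
  then have "real k + delta r i = - delta r i'" using p by simp
  then show False using kr b1 b2 by argo
qed

lemma VV_RE:
  assumes i: "i \<in> {1..r}" and i': "i' \<in> {1..r}" and ne: "\<bar>delta r i\<bar> \<noteq> \<bar>delta r i'\<bar>"
    and p1: "p \<in> VV r s c i" and p2: "p \<in> RE r s i'"
  shows False
proof -
  note b1 = dbounds[OF r1 i] and b2 = dbounds[OF r1 i']
  have dne: "delta r i \<noteq> delta r i'" "delta r i \<noteq> - delta r i'" using ne by auto
  obtain k y where k: "k \<in> {1..2 * s - 1}" "- 1/4 \<le> y" "y \<le> 1/4" and p: "p = (real k + delta r i, y, zV r c k i y)"
    using VV_pt[OF p1] by blast
  have kr: "1 \<le> real k" "real k + 1 \<le> 2 * real s" using k s1 by auto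
  obtain y' where "p = (2 * real s - delta r i', y', 0)" using RE_pt[OF p2] by blast
  then have "real k + delta r i = 2 * real s - delta r i'" using p by simp
  then show False using kr b1 b2 by argo
qed

lemma HH_HH:
  assumes i: "i \<in> {1..r}" and i': "i' \<in> {1..r}" and ne: "\<bar>delta r i\<bar> \<noteq> \<bar>delta r i'\<bar>"
    and p1: "p \<in> HH r s c i" and p2: "p \<in> HH r s c i'"
  shows False
proof -
  note b1 = dbounds[OF r1 i] and b2 = dbounds[OF r1 i']
  have dne: "delta r i \<noteq> delta r i'" "delta r i \<noteq> - delta r i'" using ne by auto
  obtain x where x: "- delta r i \<le> x" "x \<le> 2 * real s - delta r i" and p: "p = (x, delta r i, zH r s c i x)" using HH_pt[OF p1] by blast
  obtain x' where "p = (x', delta r i', zH r s c i' x')" using HH_pt[OF p2] by blast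
  then show False using p dne by simp
qed

lemma HH_LE:
  assumes i: "i \<in> {1..r}" and i': "i' \<in> {1..r}" and ne: "\<bar>delta r i\<bar> \<noteq> \<bar>delta r i'\<bar>"
    and p1: "p \<in> HH r s c i" and p2: "p \<in> LE r i'"
  shows False
proof -
  note b1 = dbounds[OF r1 i] and b2 = dbounds[OF r1 i']
  have dne: "delta r i \<noteq> delta r i'" "delta r i \<noteq> - delta r i'" using ne by auto
  obtain x where x: "- delta r i \<le> x" "x \<le> 2 * real s - delta r i" and p: "p = (x, delta r i, zH r s c i x)" using HH_pt[OF p1] by blast
  obtain y' where "y' \<le> delta r i'" "p = (- delta r i', y', 0)" using LE_pt[OF p2] by blast
  then have "x = - delta r i'" "delta r i \<le> delta r i'" using p by auto
  then show False using x dne by argo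
qed

lemma HH_RE:
  assumes i: "i \<in> {1..r}" and i': "i' \<in> {1..r}" and ne: "\<bar>delta r i\<bar> \<noteq> \<bar>delta r i'\<bar>"
    and p1: "p \<in> HH r s c i" and p2: "p \<in> RE r s i'"
  shows False
proof -
  note b1 = dbounds[OF r1 i] and b2 = dbounds[OF r1 i']
  have dne: "delta r i \<noteq> delta r i'" "delta r i \<noteq> - delta r i'" using ne by auto
  obtain x where x: "- delta r i \<le> x" "x \<le> 2 * real s - delta r i" and p: "p = (x, delta r i, zH r s c i x)" using HH_pt[OF p1] by blast
  obtain y' where "delta r i' \<le> y'" "p = (2 * real s - delta r i', y', 0)" using RE_pt[OF p2] by blast
  then have "x = 2 * real s - delta r i'" "delta r i' \<le> delta r i" using p by auto
  then show False using x dne by argo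
qed

lemma LE_LE:
  assumes i: "i \<in> {1..r}" and i': "i' \<in> {1..r}" and ne: "\<bar>delta r i\<bar> \<noteq> \<bar>delta r i'\<bar>"
    and p1: "p \<in> LE r i" and p2: "p \<in> LE r i'"
  shows False
proof -
  note b1 = dbounds[OF r1 i] and b2 = dbounds[OF r1 i']
  have dne: "delta r i \<noteq> delta r i'" "delta r i \<noteq> - delta r i'" using ne by auto
  obtain y where "p = (- delta r i, y, 0)" using LE_pt[OF p1] by blast
  moreover obtain y' where "p = (- delta r i', y', 0)" using LE_pt[OF p2] by blast
  ultimately show False using dne by simp
qed

lemma LE_RE:
  assumes i: "i \<in> {1..r}" and i': "i' \<in> {1..r}" and ne: "\<bar>delta r i\<bar> \<noteq> \<bar>delta r i'\<bar>"
    and p1: "p \<in> LE r i" and p2: "p \<in> RE r s i'"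
  shows False
proof -
  note b1 = dbounds[OF r1 i] and b2 = dbounds[OF r1 i']
  have dne: "delta r i \<noteq> delta r i'" "delta r i \<noteq> - delta r i'" using ne by auto
  obtain y where "p = (- delta r i, y, 0)" using LE_pt[OF p1] by blast
  moreover obtain y' where "p = (2 * real s - delta r i', y', 0)" using RE_pt[OF p2] by blast
  ultimately have "- delta r i = 2 * real s - delta r i'" by simp
  moreover have "1 \<le> real s" using s1 by simp
  ultimately show False using b1 b2 by argo
qed

lemma RE_RE:
  assumes i: "i \<in> {1..r}" and i': "i' \<in> {1..r}" and ne: "\<bar>delta r i\<bar> \<noteq> \<bar>delta r i'\<bar>"
    and p1: "p \<in> RE r s i" and p2: "p \<in> RE r s i'"
  shows False
proof -
  note b1 = dbounds[OF r1 i] and b2 = dbounds[OF r1 i']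
  have dne: "delta r i \<noteq> delta r i'" "delta r i \<noteq> - delta r i'" using ne by auto
  obtain y where "p = (2 * real s - delta r i, y, 0)" using RE_pt[OF p1] by blast
  moreover obtain y' where "p = (2 * real s - delta r i', y', 0)" using RE_pt[OF p2] by blast
  ultimately show False using dne by simp
qed

end

lemma tent_cont: "continuous_on S (\<lambda>x::real. tent r (x - a))"
  unfolding tent_def by (intro continuous_intros)

lemma zV_cont: "continuous_on S (zV r c k i)"
proof -
  have "continuous_on S (\<lambda>y. \<Sum>j\<in>{1..r}. if c (k, i, j) then 0 else tent r (y - delta r j))"
  proof (rule continuous_on_sum)
    fix j show "continuous_on S (\<lambda>y. if c (k, i, j) then 0 else tent r (y - delta r j))"
      by (cases "c (k, i, j)") (simp_all add: tent_cont)
  qed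
  then show ?thesis unfolding zV_def[abs_def] .
qed

lemma zH_cont: "continuous_on S (zH r s c j)"
proof -
  have "continuous_on S (\<lambda>x. \<Sum>k\<in>{1..2 * s - 1}. \<Sum>i\<in>{1..r}.
       if c (k, i, j) then tent r (x - real k - delta r i) else 0)"
  proof (intro continuous_on_sum)
    fix k i show "continuous_on S (\<lambda>x. if c (k, i, j) then tent r (x - real k - delta r i) else 0)"
      using tent_cont[of S r "real k + delta r i"] by (cases "c (k, i, j)") (simp_all add: diff_diff_eq)
  qed
  then show ?thesis unfolding zH_def[abs_def] .
qed

lemma finite_matched: "finite {(a, b). matched xs a b}"
proof (rule finite_subset)
  show "{(a, b). matched xs a b} \<subseteq> {..length xs} \<times> {..length xs}"
    by (auto simp: matched_def)
qed simp

lemma compact_upper_arc: "compact (upper_arc r a b i)"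
  unfolding upper_arc_def by (intro compact_continuous_image continuous_intros) simp

lemma compact_lower_arc: "compact (lower_arc r a b i)"
  unfolding lower_arc_def by (intro compact_continuous_image continuous_intros) simp

lemma compact_piece: "compact (piece r s U W c i)"
proof -
  have "compact (UA r U i)" unfolding UA_def
    by (rule compact_UN[OF finite_matched]) (auto simp: compact_upper_arc)
  moreover have "compact (LA r W i)" unfolding LA_def
    by (rule compact_UN[OF finite_matched]) (auto simp: compact_lower_arc)
  moreover have "compact (VV r s c i)" unfolding VV_def
    by (intro compact_UN finite_atLeastAtMost compact_continuous_image continuous_intros zV_cont) simp
  moreover have "compact (HH r s c i)" unfolding HH_def
    by (intro compact_continuous_image continuous_intros zH_cont) simp
  moreover have "compact (LE r i)" unfolding LE_def
    by (intro compact_continuous_image continuous_intros) simp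
  moreover have "compact (RE r s i)" unfolding RE_def
    by (intro compact_continuous_image continuous_intros) simp
  ultimately show ?thesis unfolding piece_def by (intro compact_Un)
qed

lemma piece_nonempty: "piece r s U W c i \<noteq> {}"
proof -
  have "(- delta r i, delta r i, zH r s c i (- delta r i)) \<in> HH r s c i"
    unfolding HH_def by (rule image_eqI[where x = "- delta r i"]) auto
  then show ?thesis unfolding piece_def by blast
qed

context lk
begin

lemma piece_disj:
  assumes i: "i \<in> {1..r}" and i': "i' \<in> {1..r}" and ne: "\<bar>delta r i\<bar> \<noteq> \<bar>delta r i'\<bar>"
    and p1: "p \<in> piece r s U W c i" and p2: "p \<in> piece r s U W c i'"
  shows False
proof -
  have ne': "\<bar>delta r i'\<bar> \<noteq> \<bar>delta r i\<bar>" using ne by simp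
  note L = UA_UA[OF i i' ne] LA_LA[OF i i' ne] UA_LA[OF i i' ne] UA_VV[OF i i' ne] UA_HH[OF i i' ne]
    UA_LE[OF i i' ne] UA_RE[OF i i' ne] LA_VV[OF i i' ne] LA_HH[OF i i' ne] LA_LE[OF i i' ne]
    LA_RE[OF i i' ne] VV_VV[OF i i' ne] VV_HH[OF i i' ne] VV_LE[OF i i' ne] VV_RE[OF i i' ne]
    HH_HH[OF i i' ne] HH_LE[OF i i' ne] HH_RE[OF i i' ne] LE_LE[OF i i' ne] LE_RE[OF i i' ne] RE_RE[OF i i' ne]
  note L' = UA_LA[OF i' i ne'] UA_VV[OF i' i ne'] UA_HH[OF i' i ne']
    UA_LE[OF i' i ne'] UA_RE[OF i' i ne'] LA_VV[OF i' i ne'] LA_HH[OF i' i ne'] LA_LE[OF i' i ne']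
    LA_RE[OF i' i ne'] VV_HH[OF i' i ne'] VV_LE[OF i' i ne'] VV_RE[OF i' i ne']
    HH_LE[OF i' i ne'] HH_RE[OF i' i ne'] LE_RE[OF i' i ne']
  from p1 p2 show False unfolding piece_def
    by (elim UnE) (blast intro: L L')+
qed

definition fcls :: "R3 \<Rightarrow> real" where
  "fcls p = \<bar>delta r (SOME i. i \<in> {1..r} \<and> p \<in> piece r s U W c i)\<bar>"

lemma fcls_piece: assumes i: "i \<in> {1..r}" and p: "p \<in> piece r s U W c i"
  shows "fcls p = \<bar>delta r i\<bar>"
proof -
  let ?j = "SOME i. i \<in> {1..r} \<and> p \<in> piece r s U W c i"
  have "?j \<in> {1..r} \<and> p \<in> piece r s U W c ?j" by (rule someI[of _ i]) (use i p in auto)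
  then have j: "?j \<in> {1..r}" and pj: "p \<in> piece r s U W c ?j" by auto
  have "\<bar>delta r i\<bar> = \<bar>delta r ?j\<bar>"
  proof (rule ccontr)
    assume "\<bar>delta r i\<bar> \<noteq> \<bar>delta r ?j\<bar>"
    from piece_disj[OF i j this p pj] show False .
  qed
  then show ?thesis unfolding fcls_def by simp
qed

lemma fcls_cont: "continuous_on (meander_R3 r s U W c) fcls"
  unfolding meander_pieces
proof (rule continuous_on_closed_Union)
  fix i assume i: "i \<in> {1..r}"
  show "closed (piece r s U W c i)" by (rule compact_imp_closed[OF compact_piece])
  show "continuous_on (piece r s U W c i) fcls"
    by (rule continuous_on_cong[THEN iffD2, OF refl _ continuous_on_const[of _ "\<bar>delta r i\<bar>"]])
      (use fcls_piece[OF i] in auto)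
qed simp

lemma fcls_image: "fcls ` meander_R3 r s U W c = (\<lambda>i. \<bar>delta r i\<bar>) ` {1..r}"
proof
  show "fcls ` meander_R3 r s U W c \<subseteq> (\<lambda>i. \<bar>delta r i\<bar>) ` {1..r}"
    unfolding meander_pieces using fcls_piece by auto
  show "(\<lambda>i. \<bar>delta r i\<bar>) ` {1..r} \<subseteq> fcls ` meander_R3 r s U W c"
  proof
    fix v assume "v \<in> (\<lambda>i. \<bar>delta r i\<bar>) ` {1..r}"
    then obtain i where i: "i \<in> {1..r}" and v: "v = \<bar>delta r i\<bar>" by auto
    obtain p where p: "p \<in> piece r s U W c i" using piece_nonempty by blast
    then have "p \<in> meander_R3 r s U W c" unfolding meander_pieces using i by auto
    then show "v \<in> fcls ` meander_R3 r s U W c" using fcls_piece[OF i p] v by (metis image_eqI)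
  qed
qed

lemma compact_M: "compact (meander_R3 r s U W c)"
  unfolding meander_pieces by (intro compact_UN finite_atLeastAtMost compact_piece)

end

lemma card_absdelta: assumes "1 \<le> r" shows "r div 2 \<le> card ((\<lambda>i. \<bar>delta r i\<bar>) ` {1..r})"
proof -
  have neg: "delta r i < 0" if "i \<in> {1..r div 2}" for i
  proof -
    have "2 * i \<le> r" using that by auto
    then have "2 * real i \<le> real r" by (metis of_nat_le_iff of_nat_mult of_nat_numeral)
    then have "2 * real i - real r - 1 < 0" by argo
    moreover have "0 < 8 * real r" using assms by simp
    ultimately show ?thesis unfolding delta_def by (simp add: divide_neg_pos)
  qed
  have "inj_on (\<lambda>i. \<bar>delta r i\<bar>) {1..r div 2}"
  proof (rule inj_onI)
    fix i j assume i: "i \<in> {1..r div 2}" and j: "j \<in> {1..r div 2}" and e: "\<bar>delta r i\<bar> = \<bar>delta r j\<bar>"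
    then have "delta r i = delta r j" using neg[OF i] neg[OF j] by simp
    then have "(real i - real j) / (4 * real r) = 0" using delta_diff[OF assms, of i j] by simp
    then show "i = j" using assms by simp
  qed
  then have "card ((\<lambda>i. \<bar>delta r i\<bar>) ` {1..r div 2}) = r div 2" by (simp add: card_image)
  moreover have "card ((\<lambda>i. \<bar>delta r i\<bar>) ` {1..r div 2}) \<le> card ((\<lambda>i. \<bar>delta r i\<bar>) ` {1..r})"
    by (intro card_mono finite_imageI) auto
  ultimately show ?thesis by simp
qed

lemma circles_bound:
  fixes f :: "'a::topological_space \<Rightarrow> real"
  assumes hom: "X homeomorphic ({..<n} \<times> sphere (0::complex) 1)"
    and cont: "continuous_on X f" and fin: "finite (f ` X)"
  shows "card (f ` X) \<le> n"
proof -
  let ?C = "{..<n} \<times> sphere (0::complex) 1"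
  from hom obtain \<phi> \<psi> where h: "homeomorphism X ?C \<phi> \<psi>"
    unfolding homeomorphic_def by blast
  have img: "\<psi> ` ?C = X" using h by (simp add: homeomorphism_def)
  have cg: "continuous_on ?C (f \<circ> \<psi>)"
    using h cont by (metis continuous_on_compose homeomorphism_def)
  have eq: "f ` X = (\<Union>k<n. (f \<circ> \<psi>) ` ({k} \<times> sphere 0 1))"
    using img by auto
  have each: "card ((f \<circ> \<psi>) ` ({k} \<times> sphere (0::complex) 1)) \<le> 1" if "k < n" for k
  proof -
    have conn: "connected ({k} \<times> sphere (0::complex) 1)"
      by (intro connected_Times connected_sphere) auto
    have sub: "{k} \<times> sphere (0::complex) 1 \<subseteq> ?C" using that by auto
    have c2: "connected ((f \<circ> \<psi>) ` ({k} \<times> sphere (0::complex) 1))"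
      by (rule connected_continuous_image[OF continuous_on_subset[OF cg sub] conn])
    have "finite ((f \<circ> \<psi>) ` ({k} \<times> sphere (0::complex) 1))"
      using img sub fin by (metis finite_subset image_comp image_mono)
    then have "(f \<circ> \<psi>) ` ({k} \<times> sphere (0::complex) 1) = {} \<or> (\<exists>a. (f \<circ> \<psi>) ` ({k} \<times> sphere (0::complex) 1) = {a})"
      using connected_finite_iff_sing[OF c2] by blast
    then show ?thesis by auto
  qed
  have "card (f ` X) \<le> (\<Sum>k<n. card ((f \<circ> \<psi>) ` ({k} \<times> sphere (0::complex) 1)))"
    unfolding eq by (rule card_UN_le) simp
  also have "\<dots> \<le> (\<Sum>k<n. 1)" by (rule sum_mono) (use each in auto)
  finally show ?thesis by simp
qed

lemma inv_stereo_cont: "continuous_on S inv_stereo"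
proof -
  have nz: "(norm x)\<^sup>2 + 1 \<noteq> (0::real)" for x :: R3
    using zero_le_power2[of "norm x"] by linarith
  show ?thesis unfolding inv_stereo_def[abs_def]
    by (intro continuous_intros) (use nz in auto)
qed

lemma inv_stereo_inj: "inj_on inv_stereo S"
proof (rule inj_onI)
  fix p q assume "inv_stereo p = inv_stereo q"
  then have e1: "scaleR (2 / ((norm p)\<^sup>2 + 1)) p = scaleR (2 / ((norm q)\<^sup>2 + 1)) q"
    and e2: "((norm p)\<^sup>2 - 1) / ((norm p)\<^sup>2 + 1) = ((norm q)\<^sup>2 - 1) / ((norm q)\<^sup>2 + 1)"
    unfolding inv_stereo_def by auto
  have np: "(norm p)\<^sup>2 + 1 > 0" "(norm q)\<^sup>2 + 1 > 0"
    using zero_le_power2[of "norm p"] zero_le_power2[of "norm q"] by linarith+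
  from e2 np have "((norm p)\<^sup>2 - 1) * ((norm q)\<^sup>2 + 1) = ((norm q)\<^sup>2 - 1) * ((norm p)\<^sup>2 + 1)"
    by (simp add: field_simps)
  then have "(norm p)\<^sup>2 = (norm q)\<^sup>2" by (simp add: algebra_simps)
  then show "p = q" using e1 np by simp
qed

lemma inv_stereo_S3: "inv_stereo p \<in> S3"
proof -
  let ?t = "(norm p)\<^sup>2"
  have tp: "?t + 1 > 0" using zero_le_power2[of "norm p"] by linarith
  have "(norm (inv_stereo p))\<^sup>2 = (2 * norm p / (?t + 1))\<^sup>2 + (\<bar>?t - 1\<bar> / (?t + 1))\<^sup>2"
    unfolding inv_stereo_def by (simp add: norm_Pair power_mult_distrib abs_mult)
  also have "\<dots> = (4 * ?t + (?t - 1)\<^sup>2) / (?t + 1)\<^sup>2"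
    by (simp add: power_divide power_mult_distrib add_divide_distrib)
  also have "4 * ?t + (?t - 1)\<^sup>2 = (?t + 1)\<^sup>2" by (simp add: power2_eq_square algebra_simps)
  also have "(?t + 1)\<^sup>2 / (?t + 1)\<^sup>2 = 1" using tp by simp
  finally have "(norm (inv_stereo p))\<^sup>2 = 1" .
  then have "norm (inv_stereo p) = 1" using norm_ge_zero[of "inv_stereo p"] by (auto simp: power2_eq_1_iff)
  then show ?thesis unfolding S3_def by simp
qed

lemma no_isotopy:
  assumes r1: "1 \<le> r" and s1: "1 \<le> s" and n: "K homeomorphic ({..<n} \<times> sphere (0::complex) 1)"
    and big: "n < r div 2"
  shows "\<not> ambient_isotopic (meander_link r s U W c) K"
proof
  assume amb: "ambient_isotopic (meander_link r s U W c) K"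
  interpret lk r s U W c using r1 s1 by unfold_locales
  let ?M = "meander_R3 r s U W c" and ?A = "meander_link r s U W c"
  have h1: "?M homeomorphic ?A" unfolding meander_link_def
    by (rule homeomorphic_compact[OF compact_M inv_stereo_cont refl inv_stereo_inj])
  from amb obtain H :: "real \<times> (R3 \<times> real) \<Rightarrow> R3 \<times> real" where HH: "continuous_on ({0..1} \<times> S3) H \<and> H ` ({0..1} \<times> S3) \<subseteq> S3 \<and>
        (\<forall>t\<in>{0..1}. \<exists>g. homeomorphism S3 S3 (\<lambda>x. H (t, x)) g) \<and>
        (\<forall>x\<in>S3. H (0, x) = x) \<and> (\<lambda>x. H (1, x)) ` ?A = K"
    unfolding ambient_isotopic_def by (elim exE) (erule that)
  then have H1: "\<forall>t\<in>{0..1}. \<exists>g. homeomorphism S3 S3 (\<lambda>x. H (t, x)) g"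
    and H2: "(\<lambda>x. H (1, x)) ` ?A = K" by simp_all
  have "(1::real) \<in> {0..1}" by simp
  from bspec[OF H1 this] obtain g where hg: "homeomorphism S3 S3 (\<lambda>x. H (1, x)) g" by (elim exE)
  have AS: "?A \<subseteq> S3" unfolding meander_link_def using inv_stereo_S3 by auto
  have "homeomorphism ?A K (\<lambda>x. H (1, x)) g"
    by (rule homeomorphism_of_subsets[OF hg AS order_refl H2])
  then have h2: "?A homeomorphic K" unfolding homeomorphic_def by blast
  have "?M homeomorphic ({..<n} \<times> sphere (0::complex) 1)"
    using homeomorphic_trans[OF homeomorphic_trans[OF h1 h2] n] .
  then have "card (fcls ` ?M) \<le> n"
    by (rule circles_bound[OF _ fcls_cont]) (simp add: fcls_image)
  moreover have "r div 2 \<le> card (fcls ` ?M)" unfolding fcls_image by (rule card_absdelta[OF r1])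
  ultimately show False using big by simp
qed

theorem proposition4p6:
  fixes K :: "(R3 \<times> real) set" and s :: "nat \<Rightarrow> nat"
  assumes "is_link K"
    and "\<And>r. r \<ge> 1 \<Longrightarrow> s r \<ge> 1"
  shows "(\<lambda>r. meander_isotopy_prob r (s r) K) \<longlonglongrightarrow> 0"
proof -
  from assms(1) obtain n :: nat where n: "K homeomorphic ({..<n} \<times> sphere (0::complex) 1)"
    unfolding is_link_def by blast
  have "eventually (\<lambda>r. meander_isotopy_prob r (s r) K = 0) sequentially"
    unfolding eventually_sequentially
  proof (intro exI allI impI)
    fix r assume r: "2 * n + 2 \<le> r"
    then have r1: "1 \<le> r" and big: "n < r div 2" by auto
    have s1: "1 \<le> s r" using assms(2) r1 .
    have e: "{(U, W, c). U \<in> pstrings (s r) \<and> W \<in> pstrings (s r) \<and> c \<in> crossing_choices r (s r) \<and>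
             ambient_isotopic (meander_link r (s r) U W c) K} = {}"
      using no_isotopy[OF r1 s1 n big] by auto
    show "meander_isotopy_prob r (s r) K = 0" unfolding meander_isotopy_prob_def e by simp
  qed
  then show ?thesis by (rule tendsto_eventually)
qed

end
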